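(* Let $\epsilon>0$, $0<\delta<1$, positive integers $m\le n$, and $\sigma_1^2,\dots,\sigma_n^2>0$. Consider the weighted naive elimination algorithm: with $\omega_i=\delta\,\sigma_i^2/\sum_{j=1}^n\sigma_j^2$, it pulls each arm $i\in[n]$ exactly $\frac{2\sigma_i^2}{(\epsilon/2)^2}\ln\frac1{\omega_i}$ times, computes the sample mean $\hat\mu_i$ of each arm, and returns the $m$ arms with the largest sample means. This algorithm uses \[ 8\sum_{i\in[n]}\frac{\sigma_i^2}{\epsilon^2}\Big(\ln\frac1\delta+\mathrm{Ent}(\sigma^2_{1:n})\Big) \] samples, and it solves the $(\epsilon,\delta)$ top-$m$ arm identification problem.
   Context: Bandit setting: $n$ arms; pulling arm $i$ returns an independent sample from a distribution with unknown mean $\mu_i$ that is $\sigma_i^2$-sub-Gaussian ($\ln\mathbb E[e^{\lambda(X-\mu_i)}]\le\sigma_i^2\lambda^2/2$ for all real $\lambda$), $\sigma_i^2$ known. $\max^m_{i\in S}\mu_i$ denotes the $m$-th largest mean in $S$. An arm is $\epsilon$-approximate top-$m$ if its mean is at least $\max^m_{i\in[n]}\mu_i-\epsilon$. An algorithm solves the $(\epsilon,\delta)$ top-$m$ arm identification problem if for every such instance, with probability at least $1-\delta$, all $m$ returned arms are $\epsilon$-approximate top-$m$. $\mathrm{Ent}(a)=-\sum_i\hat a_i\ln\hat a_i$ with $\hat a_i=a_i/\sum_ja_j$ for a positive vector $a$. *)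

theory Defs
  imports "HOL-Probability.Probability"
begin

text \<open>Arms are indexed by 0,...,n-1. Variances sigma_i^2 are given as a function sig2.\<close>

definition subgaussian :: "real measure \<Rightarrow> real \<Rightarrow> real \<Rightarrow> bool" where
  "subgaussian D mu s2 \<longleftrightarrow>
     (\<forall>l::real. integrable D (\<lambda>x. exp (l * (x - mu))) \<and>
        ln (\<integral>x. exp (l * (x - mu)) \<partial>D) \<le> s2 * l\<^sup>2 / 2)"

definition mth_largest :: "nat \<Rightarrow> nat \<Rightarrow> (nat \<Rightarrow> real) \<Rightarrow> real" where
  "mth_largest m n f = rev (sort (map f [0..<n])) ! (m - 1)"

definition Ent :: "nat \<Rightarrow> (nat \<Rightarrow> real) \<Rightarrow> real" where
  "Ent n a = - (\<Sum>i<n. (a i / (\<Sum>j<n. a j)) * ln (a i / (\<Sum>j<n. a j)))"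

definition wne_weight :: "real \<Rightarrow> nat \<Rightarrow> (nat \<Rightarrow> real) \<Rightarrow> nat \<Rightarrow> real" where
  "wne_weight \<delta> n sig2 i = \<delta> * sig2 i / (\<Sum>j<n. sig2 j)"

definition wne_pulls_real :: "real \<Rightarrow> real \<Rightarrow> nat \<Rightarrow> (nat \<Rightarrow> real) \<Rightarrow> nat \<Rightarrow> real" where
  "wne_pulls_real \<epsilon> \<delta> n sig2 i = 2 * sig2 i / (\<epsilon> / 2)\<^sup>2 * ln (1 / wne_weight \<delta> n sig2 i)"

definition wne_pulls :: "real \<Rightarrow> real \<Rightarrow> nat \<Rightarrow> (nat \<Rightarrow> real) \<Rightarrow> nat \<Rightarrow> nat" where
  "wne_pulls \<epsilon> \<delta> n sig2 i = nat \<lceil>wne_pulls_real \<epsilon> \<delta> n sig2 i\<rceil>"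

definition sample_mean :: "nat \<Rightarrow> (nat \<Rightarrow> 'a \<Rightarrow> real) \<Rightarrow> 'a \<Rightarrow> real" where
  "sample_mean N Xi \<omega> = (\<Sum>k<N. Xi k \<omega>) / real N"

end

theory Submission
  imports Defs
begin

lemma subg_chernoff:
  fixes Y :: "'b \<Rightarrow> 'a \<Rightarrow> real" and c :: "'b \<Rightarrow> real" and s t :: real
  assumes P: "prob_space M" and fin: "finite I" and ne: "I \<noteq> {}"
    and ind: "prob_space.indep_vars M (\<lambda>_. borel) Y I"
    and mgf: "\<And>j l. j \<in> I \<Longrightarrow> (\<integral>\<^sup>+x. ennreal (exp (l * (Y j x - c j))) \<partial>M) \<le> ennreal (exp (s * l\<^sup>2 / 2))"
    and s: "s > 0" and t: "t > 0"
  shows "measure M {x\<in>space M. (\<Sum>j\<in>I. (Y j x - c j)) \<ge> t} \<le> exp (- t\<^sup>2 / (2 * card I * s))"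
proof -
  interpret prob_space M by fact
  have cI: "card I > 0" using fin ne by (simp add: card_gt_0_iff)
  define d where "d = real (card I) * s"
  have d: "d > 0" using cI s by (simp add: d_def)
  define l where "l = t / d"
  have l: "l > 0" using t d by (simp add: l_def)
  have rv: "\<And>j. j \<in> I \<Longrightarrow> random_variable borel (Y j)"
    using ind unfolding indep_vars_def by blast
  have [measurable]: "(\<lambda>x. (\<Sum>j\<in>I. (Y j x - c j))) \<in> borel_measurable M"
    using rv by (intro borel_measurable_sum borel_measurable_diff) auto
  have "ennreal (prob {x\<in>space M. (\<Sum>j\<in>I. (Y j x - c j)) \<ge> t}) = emeasure M {x\<in>space M. (\<Sum>j\<in>I. (Y j x - c j)) \<ge> t}"
    by (simp add: emeasure_eq_measure)
  also have "\<dots> \<le> ennreal (exp (-l*t)) * (\<integral>\<^sup>+x\<in>space M. exp (l * ((\<Sum>j\<in>I. (Y j x - c j)))) \<partial>M)"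
    by (intro Chernoff_ineq_nn_integral_ge l) auto
  also have "(\<integral>\<^sup>+x\<in>space M. exp (l * ((\<Sum>j\<in>I. (Y j x - c j)))) \<partial>M) =
             (\<integral>\<^sup>+x. (\<Prod>j\<in>I. ennreal (exp (l * (Y j x - c j)))) \<partial>M)"
    by (intro nn_integral_cong)
       (simp_all add: sum_distrib_left exp_sum fin prod_ennreal)
  also have "\<dots> = (\<Prod>j\<in>I. \<integral>\<^sup>+x. ennreal (exp (l * (Y j x - c j))) \<partial>M)"
    by (intro indep_vars_nn_integral fin indep_vars_compose2[OF ind]) auto
  also have "ennreal (exp (-l * t)) * \<dots> \<le>
               ennreal (exp (-l * t)) * (\<Prod>j\<in>I. ennreal (exp (s * l\<^sup>2 / 2)))"
    by (intro mult_left_mono prod_mono_ennreal mgf) auto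
  also have "\<dots> = ennreal (exp (-l*t) * (\<Prod>j\<in>I. exp (s * l\<^sup>2 / 2)))"
    by (simp add: ennreal_mult ennreal_power)
  also have "exp (-l*t) * (\<Prod>j\<in>I. exp (s * l\<^sup>2 / 2)) = exp (d * l\<^sup>2 / 2 - l * t)"
  proof -
    have "(\<Prod>j\<in>I. exp (s * l\<^sup>2 / 2)) = exp (real (card I) * (s * l\<^sup>2 / 2))"
      by (simp add: exp_of_nat_mult[symmetric])
    then show ?thesis by (simp add: d_def exp_add[symmetric] algebra_simps)
  qed
  also have "d * l\<^sup>2 / 2 - l * t = - t\<^sup>2 / (2 * card I * s)"
    using d by (simp add: l_def d_def field_simps power2_eq_square)
  finally show ?thesis
    by (subst (asm) ennreal_le_iff) simp_all
qed

lemma mgf_bound: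
  fixes X :: "'a \<Rightarrow> real" and l mu s2 :: real
  assumes P: "prob_space M" and Xm: "X \<in> borel_measurable M"
    and dX: "distr M borel X = D" and sg: "subgaussian D mu s2"
  shows "(\<integral>\<^sup>+x. ennreal (exp (l * (X x - mu))) \<partial>M) \<le> ennreal (exp (s2 * l\<^sup>2 / 2))"
proof -
  have sD: "sets D = sets borel" using dX[symmetric] by simp
  have "(\<integral>\<^sup>+x. ennreal (exp (l * (X x - mu))) \<partial>M) = (\<integral>\<^sup>+y. ennreal (exp (l * (y - mu))) \<partial>distr M borel X)"
    using Xm by (subst nn_integral_distr) auto
  also have "\<dots> = (\<integral>\<^sup>+y. ennreal (exp (l * (y - mu))) \<partial>D)" using dX by simp
  also have "\<dots> = ennreal (\<integral>y. exp (l * (y - mu)) \<partial>D)"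
    using sg unfolding subgaussian_def by (intro nn_integral_eq_integral) auto
  also have "\<dots> \<le> ennreal (exp (s2 * l\<^sup>2 / 2))"
  proof (rule ennreal_leI)
    define I where "I = (\<integral>y. exp (l * (y - mu)) \<partial>D)"
    have lnI: "ln I \<le> s2 * l\<^sup>2 / 2" using sg unfolding subgaussian_def I_def by blast
    show "I \<le> exp (s2 * l\<^sup>2 / 2)"
    proof (cases "I > 0")
      case True
      then have "I = exp (ln I)" by simp
      also have "\<dots> \<le> exp (s2 * l\<^sup>2 / 2)" using lnI by simp
      finally show ?thesis .
    next
      case False
      then show ?thesis by (smt (verit) exp_gt_zero)
    qed
  qed
  finally show ?thesis .
qed

lemma arm_tail:
  fixes X :: "nat \<Rightarrow> nat \<Rightarrow> 'a \<Rightarrow> real" and mu s2 e :: real and N i :: nat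
  assumes P: "prob_space M"
    and ind: "prob_space.indep_vars M (\<lambda>_. borel) (\<lambda>(i, k). X i k) J"
    and sub: "{i} \<times> {..<N} \<subseteq> J"
    and meas: "\<forall>k<N. X i k \<in> borel_measurable M"
    and dX: "\<forall>k<N. distr M borel (X i k) = D"
    and sg: "subgaussian D mu s2" and s2: "s2 > 0" and e: "e > 0" and N: "N > 0"
  shows "measure M {x\<in>space M. sample_mean N (X i) x \<ge> mu + e} \<le> exp (- N * e\<^sup>2 / (2 * s2))"
    and "measure M {x\<in>space M. sample_mean N (X i) x \<le> mu - e} \<le> exp (- N * e\<^sup>2 / (2 * s2))"
proof -
  interpret prob_space M by fact
  let ?I = "{i} \<times> {..<N}"
  have ind2: "indep_vars (\<lambda>_. borel) (\<lambda>(i, k). X i k) ?I"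
    using indep_vars_subset[OF ind sub] .
  have fin: "finite ?I" and ne: "?I \<noteq> {}" using N by auto
  have cI: "card ?I = N" by (simp add: card_cartesian_product)
  have I_eq: "?I = Pair i ` {..<N}" by auto
  have sumeq: "(\<Sum>p\<in>?I. f p) = (\<Sum>k<N. f (i, k))" for f :: "nat \<times> nat \<Rightarrow> real"
    unfolding I_eq by (subst sum.reindex) (auto simp: inj_on_def)
  have t: "real N * e > 0" using N e by simp
  have ex: "exp (- (real N * e)\<^sup>2 / (2 * real (card ?I) * s2)) = exp (- N * e\<^sup>2 / (2 * s2))"
    using N s2 unfolding cI by (simp add: field_simps power2_eq_square)
  have sm: "sample_mean N (X i) x = (\<Sum>k<N. X i k x) / real N" for x
    by (simp add: sample_mean_def)
  have c1: "(\<Sum>p\<in>?I. ((\<lambda>(i, k). X i k) p x - mu)) = (\<Sum>k<N. X i k x) - N * mu" for x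
    by (simp add: sumeq sum_subtractf)
  have c2: "(\<Sum>p\<in>?I. ((\<lambda>p x. - (\<lambda>(i, k). X i k) p x) p x - (- mu))) = N * mu - (\<Sum>k<N. X i k x)" for x
    by (simp add: sumeq sum_subtractf sum_negf)
  have "{x\<in>space M. sample_mean N (X i) x \<ge> mu + e} =
        {x\<in>space M. (\<Sum>p\<in>?I. ((\<lambda>(i, k). X i k) p x - mu)) \<ge> real N * e}"
    using N unfolding sm c1 by (auto simp: field_simps)
  also have "measure M \<dots> \<le> exp (- (real N * e)\<^sup>2 / (2 * real (card ?I) * s2))"
  proof -
    have mg: "(\<integral>\<^sup>+x. ennreal (exp (l * ((\<lambda>(i, k). X i k) j x - mu))) \<partial>M) \<le> ennreal (exp (s2 * l\<^sup>2 / 2))"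
      if j: "j \<in> ?I" for j l
    proof -
      from j obtain k where jk: "j = (i, k)" "k < N" by auto
      show ?thesis using mgf_bound[OF P _ _ sg] meas dX jk by simp
    qed
    show ?thesis using subg_chernoff[where c="\<lambda>_. mu", OF P fin ne ind2 mg s2 t] by simp
  qed
  finally show "measure M {x\<in>space M. sample_mean N (X i) x \<ge> mu + e} \<le> exp (- N * e\<^sup>2 / (2 * s2))"
    using ex by simp
  have ind3: "indep_vars (\<lambda>_. borel) (\<lambda>p x. - (\<lambda>(i, k). X i k) p x) ?I"
    by (rule indep_vars_compose2[OF ind2]) auto
  have "{x\<in>space M. sample_mean N (X i) x \<le> mu - e} =
        {x\<in>space M. (\<Sum>p\<in>?I. ((\<lambda>p x. - (\<lambda>(i, k). X i k) p x) p x - (- mu))) \<ge> real N * e}"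
    using N unfolding sm c2 by (auto simp: field_simps)
  also have "measure M \<dots> \<le> exp (- (real N * e)\<^sup>2 / (2 * real (card ?I) * s2))"
  proof -
    have mg: "(\<integral>\<^sup>+x. ennreal (exp (l * ((\<lambda>p x. - (\<lambda>(i, k). X i k) p x) j x - - mu))) \<partial>M) \<le> ennreal (exp (s2 * l\<^sup>2 / 2))"
      if j: "j \<in> ?I" for j l
    proof -
      from j obtain k where jk: "j = (i, k)" "k < N" by auto
      have "(\<integral>\<^sup>+x. ennreal (exp ((- l) * (X i k x - mu))) \<partial>M) \<le> ennreal (exp (s2 * (- l)\<^sup>2 / 2))"
        using mgf_bound[OF P _ _ sg, of "X i k" "- l"] meas dX jk by simp
      then show ?thesis using jk by (simp add: algebra_simps)
    qed
    show ?thesis using subg_chernoff[where c="\<lambda>_. - mu", OF P fin ne ind3 mg s2 t] by simp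
  qed
  finally show "measure M {x\<in>space M. sample_mean N (X i) x \<le> mu - e} \<le> exp (- N * e\<^sup>2 / (2 * s2))"
    using ex by simp
qed

lemma mth_card:
  fixes \<mu> :: "nat \<Rightarrow> real"
  assumes "1 \<le> m" "m \<le> n"
  shows "m \<le> card {j. j < n \<and> mth_largest m n \<mu> \<le> \<mu> j}"
proof -
  define ys where "ys = sort (map \<mu> [0..<n])"
  define v where "v = mth_largest m n \<mu>"
  have ly: "length ys = n" by (simp add: ys_def)
  have sy: "sorted ys" by (simp add: ys_def)
  have v: "v = ys ! (n - m)"
    unfolding v_def mth_largest_def ys_def[symmetric] using assms ly
    by (simp add: rev_nth)
  have "card {j. j < n \<and> v \<le> \<mu> j} = card (set (filter (\<lambda>j. v \<le> \<mu> j) [0..<n]))"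
    by (rule arg_cong[where f=card]) auto
  also have "\<dots> = length (filter (\<lambda>j. v \<le> \<mu> j) [0..<n])"
    by (rule distinct_card) simp
  also have "\<dots> = length (filter (\<lambda>x. v \<le> x) (map \<mu> [0..<n]))"
    by (simp add: filter_map comp_def)
  also have "\<dots> = length (filter (\<lambda>x. v \<le> x) ys)"
    by (metis mset_filter mset_sort size_mset ys_def)
  also have "\<dots> = length (filter (\<lambda>x. v \<le> x) (take (n - m) ys)) + length (filter (\<lambda>x. v \<le> x) (drop (n - m) ys))"
    by (metis append_take_drop_id filter_append length_append)
  also have "filter (\<lambda>x. v \<le> x) (drop (n - m) ys) = drop (n - m) ys"
  proof (rule filter_True, rule ballI)
    fix x assume "x \<in> set (drop (n - m) ys)"
    then obtain k where k: "k < length (drop (n - m) ys)" "x = drop (n - m) ys ! k"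
      by (metis in_set_conv_nth)
    then have "x = ys ! (n - m + k)" "n - m + k < n" using ly by auto
    then show "v \<le> x" unfolding v using sorted_nth_mono[OF sy, of "n - m" "n - m + k"] ly by simp
  qed
  finally show ?thesis using ly assms unfolding v_def by simp
qed

lemma pulls_sum:
  fixes \<epsilon> \<delta> :: real and n :: nat and sig2 :: "nat \<Rightarrow> real"
  assumes eps: "\<epsilon> > 0" and delta: "0 < \<delta>" and n: "n \<ge> 1"
    and sig_pos: "\<forall>i<n. sig2 i > 0"
  shows "(\<Sum>i<n. wne_pulls_real \<epsilon> \<delta> n sig2 i)
           = 8 * (\<Sum>i<n. sig2 i / \<epsilon>\<^sup>2) * (ln (1 / \<delta>) + Ent n sig2)"
proof -
  define S where "S = (\<Sum>j<n. sig2 j)"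
  define T where "T = (\<Sum>i<n. sig2 i * ln (sig2 i))"
  have S: "S > 0" unfolding S_def using n sig_pos
    by (intro sum_pos) (auto simp: lessThan_empty_iff)
  have "(\<Sum>i<n. wne_pulls_real \<epsilon> \<delta> n sig2 i) = (\<Sum>i<n. 8 / \<epsilon>\<^sup>2 * (sig2 i * (ln S - ln \<delta>) - sig2 i * ln (sig2 i)))"
  proof (rule sum.cong)
    fix i assume "i \<in> {..<n}"
    then have si: "sig2 i > 0" using sig_pos by auto
    have "ln (1 / wne_weight \<delta> n sig2 i) = ln S - ln \<delta> - ln (sig2 i)"
      unfolding wne_weight_def S_def[symmetric] using si S delta
      by (simp add: ln_div ln_mult)
    then show "wne_pulls_real \<epsilon> \<delta> n sig2 i = 8 / \<epsilon>\<^sup>2 * (sig2 i * (ln S - ln \<delta>) - sig2 i * ln (sig2 i))"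
      unfolding wne_pulls_real_def using eps by (simp only:)  (simp add: field_simps power2_eq_square)
  qed auto
  also have "\<dots> = 8 / \<epsilon>\<^sup>2 * (S * (ln S - ln \<delta>) - T)"
    by (simp only: S_def T_def sum_distrib_left[symmetric] sum_subtractf sum_distrib_right[symmetric])
  finally have L: "(\<Sum>i<n. wne_pulls_real \<epsilon> \<delta> n sig2 i) = 8 / \<epsilon>\<^sup>2 * (S * (ln S - ln \<delta>) - T)" .
  have "Ent n sig2 = - (\<Sum>i<n. (sig2 i * ln (sig2 i) - sig2 i * ln S) / S)"
    unfolding Ent_def S_def[symmetric]
  proof (intro arg_cong[where f=uminus] sum.cong refl)
    fix i assume "i \<in> {..<n}"
    then have si: "sig2 i > 0" using sig_pos by auto
    show "sig2 i / S * ln (sig2 i / S) = (sig2 i * ln (sig2 i) - sig2 i * ln S) / S"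
      using si S by (simp add: ln_div field_simps)
  qed
  also have "\<dots> = - (T - S * ln S) / S"
    by (simp only: T_def S_def sum_divide_distrib[symmetric] sum_subtractf sum_distrib_right[symmetric])
  finally have E: "Ent n sig2 = - (T - S * ln S) / S" .
  have R: "(\<Sum>i<n. sig2 i / \<epsilon>\<^sup>2) = S / \<epsilon>\<^sup>2" by (simp add: S_def sum_divide_distrib)
  show ?thesis unfolding L E R using S eps delta
    by (simp add: ln_div field_simps)
qed

lemma sets_le:
  assumes [measurable]: "f \<in> borel_measurable M"
  shows "{x\<in>space M. f x \<le> (c::real)} \<in> sets M"
  by measurable

lemma sets_ge:
  assumes [measurable]: "f \<in> borel_measurable M"
  shows "{x\<in>space M. f x \<ge> (c::real)} \<in> sets M"
  by measurable

theorem lemma2: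
  fixes \<epsilon> \<delta> :: real and m n :: nat
    and sig2 \<mu> :: "nat \<Rightarrow> real"
    and D :: "nat \<Rightarrow> real measure"
    and M :: "'a measure"
    and X :: "nat \<Rightarrow> nat \<Rightarrow> 'a \<Rightarrow> real"
  assumes eps: "\<epsilon> > 0"
    and delta: "0 < \<delta>" "\<delta> < 1"
    and mn: "1 \<le> m" "m \<le> n"
    and sig_pos: "\<forall>i<n. sig2 i > 0"
    and M: "prob_space M"
    and arms: "\<forall>i<n. prob_space (D i) \<and> sets (D i) = sets borel \<and>
                 integrable (D i) (\<lambda>x. x) \<and> (\<integral>x. x \<partial>D i) = \<mu> i \<and>
                 subgaussian (D i) (\<mu> i) (sig2 i)"
    and meas: "\<forall>i<n. \<forall>k<wne_pulls \<epsilon> \<delta> n sig2 i. X i k \<in> borel_measurable M"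
    and distr: "\<forall>i<n. \<forall>k<wne_pulls \<epsilon> \<delta> n sig2 i. distr M borel (X i k) = D i"
    and indep: "prob_space.indep_vars M (\<lambda>_. borel) (\<lambda>(i, k). X i k)
                  {(i, k). i < n \<and> k < wne_pulls \<epsilon> \<delta> n sig2 i}"
  shows "(\<Sum>i<n. wne_pulls_real \<epsilon> \<delta> n sig2 i)
           = 8 * (\<Sum>i<n. sig2 i / \<epsilon>\<^sup>2) * (ln (1 / \<delta>) + Ent n sig2)
         \<and> (\<exists>A\<in>sets M. measure M A \<ge> 1 - \<delta> \<and>
           (\<forall>\<omega>\<in>A. \<forall>S. S \<subseteq> {..<n} \<and> card S = m \<and>
              (\<forall>i\<in>S. \<forall>j\<in>{..<n} - S.
                 sample_mean (wne_pulls \<epsilon> \<delta> n sig2 j) (X j) \<omega>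
                   \<le> sample_mean (wne_pulls \<epsilon> \<delta> n sig2 i) (X i) \<omega>)
              \<longrightarrow> (\<forall>i\<in>S. \<mu> i \<ge> mth_largest m n \<mu> - \<epsilon>)))"
proof -
  interpret prob_space M by (rule M)
  have n1: "n \<ge> 1" using mn by simp
  note part1 = pulls_sum[OF eps delta(1) n1 sig_pos]
  define N where "N i = wne_pulls \<epsilon> \<delta> n sig2 i" for i
  define v where "v = mth_largest m n \<mu>"
  define Ss where "Ss = (\<Sum>j<n. sig2 j)"
  define w where "w i = wne_weight \<delta> n sig2 i" for i
  have Ss: "Ss > 0" unfolding Ss_def using n1 sig_pos
    by (intro sum_pos) (auto simp: lessThan_empty_iff)
  have sig_le: "sig2 i \<le> Ss" if "i < n" for i
    unfolding Ss_def using that sig_pos by (intro member_le_sum) auto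
  have w_pos: "w i > 0" if "i < n" for i
    unfolding w_def wne_weight_def Ss_def[symmetric] using that sig_pos Ss delta by simp
  have w_lt: "w i < 1" if "i < n" for i
  proof -
    have "sig2 i / Ss \<le> 1" using sig_le[OF that] Ss by simp
    then have dd: "\<delta> * (sig2 i / Ss) \<le> \<delta>" using delta mult_left_le[of "sig2 i / Ss" \<delta>] by linarith
    have "w i = \<delta> * (sig2 i / Ss)" unfolding w_def wne_weight_def Ss_def[symmetric] by simp
    then show ?thesis using dd delta by linarith
  qed
  have Nbound: "exp (- real (N i) * (\<epsilon>/2)\<^sup>2 / (2 * sig2 i)) \<le> w i" and Npos: "N i > 0"
    if i: "i < n" for i
  proof -
    have si: "sig2 i > 0" using sig_pos i by auto
    have lnp: "ln (1 / w i) > 0" using w_pos[OF i] w_lt[OF i] by simp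
    define pr where "pr = wne_pulls_real \<epsilon> \<delta> n sig2 i"
    have pr_eq: "pr = 2 * sig2 i / (\<epsilon> / 2)\<^sup>2 * ln (1 / w i)"
      unfolding pr_def wne_pulls_real_def w_def ..
    have prpos: "pr > 0" unfolding pr_eq using si eps lnp by simp
    have Nge: "real (N i) \<ge> pr" unfolding N_def wne_pulls_def pr_def[symmetric]
      by linarith
    then show "N i > 0" using prpos by linarith
    have "ln (1 / w i) = pr * (\<epsilon>/2)\<^sup>2 / (2 * sig2 i)"
      unfolding pr_eq using si eps by (simp add: field_simps)
    also have "\<dots> \<le> real (N i) * (\<epsilon>/2)\<^sup>2 / (2 * sig2 i)"
      using Nge si by (intro divide_right_mono mult_right_mono) auto
    finally have "- real (N i) * (\<epsilon>/2)\<^sup>2 / (2 * sig2 i) \<le> ln (w i)"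
      using w_pos[OF i] by (simp add: ln_div)
    then have "exp (- real (N i) * (\<epsilon>/2)\<^sup>2 / (2 * sig2 i)) \<le> exp (ln (w i))"
      by simp
    then show "exp (- real (N i) * (\<epsilon>/2)\<^sup>2 / (2 * sig2 i)) \<le> w i"
      using w_pos[OF i] by simp
  qed
  define B where "B i = (if v \<le> \<mu> i then {x\<in>space M. sample_mean (N i) (X i) x \<le> \<mu> i - \<epsilon>/2}
                         else {x\<in>space M. sample_mean (N i) (X i) x \<ge> \<mu> i + \<epsilon>/2})" for i
  have smm: "(\<lambda>x. sample_mean (N i) (X i) x) \<in> borel_measurable M" if i: "i < n" for i
    unfolding sample_mean_def
    using meas i unfolding N_def by (intro borel_measurable_divide borel_measurable_sum) auto
  have Bsets: "B i \<in> sets M" if i: "i < n" for i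
    unfolding B_def using sets_le[OF smm[OF i]] sets_ge[OF smm[OF i]] by simp
  have Bprob: "prob (B i) \<le> w i" if i: "i < n" for i
  proof -
    have sub: "{i} \<times> {..<N i} \<subseteq> {(i, k). i < n \<and> k < wne_pulls \<epsilon> \<delta> n sig2 i}"
      using i unfolding N_def by auto
    have a: "prob_space (D i)" "subgaussian (D i) (\<mu> i) (sig2 i)" using arms i by auto
    have e2: "\<epsilon>/2 > 0" using eps by simp
    note T = arm_tail[OF M indep sub _ _ a(2) _ e2 Npos[OF i]]
    have m1: "\<forall>k<N i. X i k \<in> borel_measurable M" and d1: "\<forall>k<N i. distr M borel (X i k) = D i"
      using meas distr i unfolding N_def by auto
    have si: "sig2 i > 0" using sig_pos i by auto
    show ?thesis
      using T(1)[OF m1 d1 si] T(2)[OF m1 d1 si] Nbound[OF i] unfolding B_def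
      by (auto intro: order.trans)
  qed
  define A where "A = space M - (\<Union>i<n. B i)"
  have Asets: "A \<in> sets M" unfolding A_def using Bsets by auto
  have "prob (\<Union>i<n. B i) \<le> (\<Sum>i<n. prob (B i))"
    using Bsets by (intro finite_measure_subadditive_finite) auto
  also have "\<dots> \<le> (\<Sum>i<n. w i)" using Bprob by (intro sum_mono) auto
  also have "\<dots> = \<delta>"
  proof -
    have "(\<Sum>i<n. w i) = (\<Sum>i<n. \<delta> * sig2 i) / Ss"
      unfolding w_def wne_weight_def Ss_def[symmetric] by (simp add: sum_divide_distrib)
    also have "\<dots> = \<delta>" using Ss by (simp add: sum_distrib_left[symmetric] Ss_def)
    finally show ?thesis .
  qed
  finally have Ub: "prob (\<Union>i<n. B i) \<le> \<delta>" .
  have UBs: "(\<Union>i<n. B i) \<in> sets M" using Bsets by auto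
  have PA: "prob A \<ge> 1 - \<delta>" unfolding A_def using prob_compl[OF UBs] Ub by simp
  have corr: "\<mu> i \<ge> v - \<epsilon>"
    if om: "\<omega> \<in> A" and S: "S \<subseteq> {..<n}" "card S = m"
      and ord: "\<forall>i\<in>S. \<forall>j\<in>{..<n} - S. sample_mean (N j) (X j) \<omega> \<le> sample_mean (N i) (X i) \<omega>"
      and iS: "i \<in> S" for \<omega> S i
  proof (rule ccontr)
    assume bad: "\<not> \<mu> i \<ge> v - \<epsilon>"
    define G where "G = {j. j < n \<and> v \<le> \<mu> j}"
    have cG: "m \<le> card G" unfolding G_def v_def using mth_card[OF mn] .
    have iG: "i \<notin> G" using bad eps unfolding G_def by auto
    have "\<exists>j\<in>G. j \<notin> S"
    proof (rule ccontr)
      assume "\<not> ?thesis"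
      then have "G \<subseteq> S - {i}" using iG by auto
      then have "card G \<le> card (S - {i})" using S by (intro card_mono) (auto intro: finite_subset)
      also have "\<dots> = m - 1" using S iS by (simp add: finite_subset)
      finally show False using cG mn by linarith
    qed
    then obtain j where jG: "j \<in> G" "j \<notin> S" by blast
    have jn: "j < n" and vj: "v \<le> \<mu> j" using jG unfolding G_def by auto
    have ni: "i < n" using S iS by auto
    have "\<omega> \<notin> B j" "\<omega> \<notin> B i" "\<omega> \<in> space M" using om jn ni unfolding A_def by auto
    then have "sample_mean (N j) (X j) \<omega> > \<mu> j - \<epsilon>/2" "sample_mean (N i) (X i) \<omega> < \<mu> i + \<epsilon>/2"
      using vj bad eps unfolding B_def by (auto split: if_splits)
    moreover have "sample_mean (N j) (X j) \<omega> \<le> sample_mean (N i) (X i) \<omega>"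
      using ord iS jG jn by auto
    ultimately show False using vj bad by linarith
  qed
  show ?thesis
    using part1 Asets PA corr unfolding N_def v_def by blast
qed

end
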